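(* Let $r\ge3$, $n\ge r+1$. For every $e\in V_\omega$ we have $R.e=(F_1F_2\cdots F_r).e$ and $R^{-1}.e=(E_{r-1}E_{r-2}\cdots E_1)E_n.e$.
   Context: $V$ is the $\mathbb{Q}(v)$-space with basis $e_t$ ($t\in\mathbb{Z}$); $E_i,F_i,K_i$ ($1\le i\le n$) act by $E_ie_{t+1}=e_t$ if $i\equiv t\pmod n$ and $0$ otherwise, $F_ie_t=e_{t+1}$ if $i\equiv t\pmod n$ and $0$ otherwise, $K_ie_t=ve_t$ if $i\equiv t\pmod n$ and $e_t$ otherwise; $R^{\pm1}e_t=e_{t\pm1}$. On $V^{\otimes r}$ these act via iterated comultiplication $\Delta(E_i)=E_i\otimes K_iK_{i+1}^{-1}+1\otimes E_i$, $\Delta(F_i)=K_i^{-1}K_{i+1}\otimes F_i+F_i\otimes1$, $\Delta(X)=X\otimes X$ for $X\in\{K_i^{\pm1},R^{\pm1}\}$ (indices mod $n$). The weight of a basis tensor $e_{t_1}\otimes\cdots\otimes e_{t_r}$ is $\lambda\in\mathbb{Z}_{\ge0}^n$ with $\lambda_i=|\{j:t_j\equiv i\pmod n\}|$; $V_\lambda$ is the span of basis tensors of weight $\lambda$. $\omega=(1,\dots,1,0,\dots,0)$ with $r$ ones and $n-r$ zeros. *)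

theory Defs
  imports "HOL-Computational_Algebra.Fraction_Field" "HOL-Computational_Algebra.Polynomial"
begin

type_synonym Qv = "rat poly fract"

definition qv :: Qv where "qv = Fraction_Field.Fract [:0, 1:] 1"

text \<open>Elements of the tensor power V^{\<otimes> r}: coefficient functions on basis tensors
  e_{t_1} \<otimes> ... \<otimes> e_{t_r}, indexed by lists [t_1,...,t_r].\<close>
type_synonym 'a tvec = "int list \<Rightarrow> 'a"

definition bt :: "int list \<Rightarrow> 'a::field tvec" where
  "bt u = (\<lambda>s. if s = u then 1 else 0)"

definition prepend :: "int \<Rightarrow> 'a::field tvec \<Rightarrow> 'a tvec" where
  "prepend t w = (\<lambda>s. case s of [] \<Rightarrow> 0 | x # xs \<Rightarrow> if x = t then w xs else 0)"

definition icong :: "nat \<Rightarrow> nat \<Rightarrow> int \<Rightarrow> bool" where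
  "icong n i t \<longleftrightarrow> int i mod int n = t mod int n"

text \<open>eigenvalue of K_i on e_t\<close>
definition kval :: "nat \<Rightarrow> 'a::field \<Rightarrow> nat \<Rightarrow> int \<Rightarrow> 'a" where
  "kval n v i t = (if icong n i t then v else 1)"

text \<open>Action of E_i on basis tensors via iterated comultiplication
  \<Delta>(E_i) = E_i \<otimes> K_i K_{i+1}^{-1} + 1 \<otimes> E_i (on V \<otimes> V^{\<otimes>(r-1)}).\<close>
fun Eact :: "nat \<Rightarrow> 'a::field \<Rightarrow> nat \<Rightarrow> int list \<Rightarrow> 'a tvec" where
  "Eact n v i [] = (\<lambda>s. 0)"
| "Eact n v i (t # ts) =
     (\<lambda>s. (if icong n i (t - 1)
            then (\<Prod>x\<leftarrow>ts. kval n v i x / kval n v (Suc i) x) * bt ((t - 1) # ts) s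
            else 0)
          + prepend t (Eact n v i ts) s)"

text \<open>Action of F_i via \<Delta>(F_i) = K_i^{-1} K_{i+1} \<otimes> F_i + F_i \<otimes> 1.\<close>
fun Fact :: "nat \<Rightarrow> 'a::field \<Rightarrow> nat \<Rightarrow> int list \<Rightarrow> 'a tvec" where
  "Fact n v i [] = (\<lambda>s. 0)"
| "Fact n v i (t # ts) =
     (\<lambda>s. (kval n v (Suc i) t / kval n v i t) * prepend t (Fact n v i ts) s
          + (if icong n i t then bt ((t + 1) # ts) s else 0))"

text \<open>R^{\<plusminus>1} acts diagonally: \<Delta>(R) = R \<otimes> R.\<close>
definition Ract :: "int list \<Rightarrow> 'a::field tvec" where
  "Ract ts = bt (map (\<lambda>t. t + 1) ts)"

definition Rinvact :: "int list \<Rightarrow> 'a::field tvec" where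
  "Rinvact ts = bt (map (\<lambda>t. t - 1) ts)"

datatype gen = GE nat | GF nat | GR | GRinv

fun gen_act :: "nat \<Rightarrow> 'a::field \<Rightarrow> gen \<Rightarrow> int list \<Rightarrow> 'a tvec" where
  "gen_act n v (GE i) = Eact n v i"
| "gen_act n v (GF i) = Fact n v i"
| "gen_act n v GR = Ract"
| "gen_act n v GRinv = Rinvact"

definition lin :: "(int list \<Rightarrow> 'a::field tvec) \<Rightarrow> 'a tvec \<Rightarrow> 'a tvec" where
  "lin A f = (\<lambda>s. \<Sum>u\<in>{u. f u \<noteq> 0}. f u * A u s)"

definition word_act :: "nat \<Rightarrow> 'a::field \<Rightarrow> gen list \<Rightarrow> 'a tvec \<Rightarrow> 'a tvec" where
  "word_act n v w f = foldr (\<lambda>g h. lin (gen_act n v g) h) w f"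

definition weight :: "nat \<Rightarrow> int list \<Rightarrow> nat \<Rightarrow> nat" where
  "weight n ts i = card {j. j < length ts \<and> icong n i (ts ! j)}"

definition omega :: "nat \<Rightarrow> nat \<Rightarrow> nat" where
  "omega r i = (if i \<le> r then 1 else 0)"

definition Vwt :: "nat \<Rightarrow> nat \<Rightarrow> (nat \<Rightarrow> nat) \<Rightarrow> 'a::field tvec set" where
  "Vwt n r lam = {f. finite {u. f u \<noteq> 0} \<and>
     (\<forall>u. f u \<noteq> 0 \<longrightarrow> length u = r \<and> (\<forall>i\<in>{1..n}. weight n u i = lam i))}"

end

theory Submission
  imports Defs
begin

definition push :: "(int list \<Rightarrow> int list) \<Rightarrow> 'a::field tvec \<Rightarrow> 'a tvec" where
  "push \<phi> f = (\<lambda>s. \<Sum>u\<in>{u. f u \<noteq> 0 \<and> \<phi> u = s}. f u)"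

lemma push_apply: "push \<phi> f s = (\<Sum>u\<in>{u. f u \<noteq> 0 \<and> \<phi> u = s}. f u)"
  by (simp add: push_def)

lemma lin_push_bt:
  assumes fin: "finite {u. f u \<noteq> 0}" and A: "\<forall>u. f u \<noteq> 0 \<longrightarrow> A u = bt (\<phi> u)"
  shows "lin A f = push \<phi> f"
proof (rule ext)
  fix s
  have "lin A f s = (\<Sum>u\<in>{u. f u \<noteq> 0}. if \<phi> u = s then f u else 0)"
    unfolding lin_def by (rule sum.cong) (auto simp: A bt_def)
  also have "\<dots> = (\<Sum>u\<in>{u\<in>{u. f u \<noteq> 0}. \<phi> u = s}. f u)"
    by (rule sum.inter_filter[symmetric]) (rule fin)
  also have "\<dots> = push \<phi> f s" unfolding push_apply by (rule sum.cong) auto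
  finally show "lin A f s = push \<phi> f s" .
qed

lemma push_supp: "{s. push \<phi> f s \<noteq> 0} \<subseteq> \<phi> ` {u. f u \<noteq> 0}"
proof
  fix s assume "s \<in> {s. push \<phi> f s \<noteq> 0}"
  then have "{u. f u \<noteq> 0 \<and> \<phi> u = s} \<noteq> {}"
  proof (intro notI)
    assume "{u. f u \<noteq> 0 \<and> \<phi> u = s} = {}"
    then have "push \<phi> f s = 0" by (simp only: push_apply sum.empty)
    then show False using \<open>s \<in> {s. push \<phi> f s \<noteq> 0}\<close> by simp
  qed
  then show "s \<in> \<phi> ` {u. f u \<noteq> 0}" by auto
qed

lemma push_fin: "finite {u. f u \<noteq> 0} \<Longrightarrow> finite {s. push \<phi> f s \<noteq> 0}"
  by (rule finite_subset[OF push_supp]) (rule finite_imageI)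

lemma push_push:
  assumes fin: "finite {u. f u \<noteq> 0}"
  shows "push \<psi> (push \<phi> f) = push (\<lambda>u. \<psi> (\<phi> u)) f"
proof (rule ext)
  fix s
  let ?S = "{u. f u \<noteq> 0 \<and> \<psi> (\<phi> u) = s}"
  let ?T = "{w \<in> \<phi> ` {u. f u \<noteq> 0}. \<psi> w = s}"
  have fS: "finite ?S" by (rule finite_subset[OF _ fin]) auto
  have fT: "finite ?T" using fin by auto
  have "push \<psi> (push \<phi> f) s = (\<Sum>w\<in>?T. push \<phi> f w)"
    unfolding push_apply[of \<psi> "push \<phi> f" s]
    apply (rule sum.mono_neutral_left[OF fT])
    using push_supp[of \<phi> f] by auto
  also have "\<dots> = (\<Sum>w\<in>?T. \<Sum>u\<in>{x. x \<in> ?S \<and> \<phi> x = w}. f u)"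
    by (rule sum.cong) (auto simp: push_apply intro!: sum.cong)
  also have "\<dots> = sum f ?S"
    by (rule sum.group[OF fS fT]) auto
  finally show "push \<psi> (push \<phi> f) s = push (\<lambda>u. \<psi> (\<phi> u)) f s"
    by (simp add: push_apply)
qed

lemma lin_push:
  assumes fin: "finite {u. f u \<noteq> 0}"
    and A: "\<forall>u. f u \<noteq> 0 \<longrightarrow> A (\<phi> u) = bt (\<psi> (\<phi> u))"
  shows "lin A (push \<phi> f) = push (\<lambda>u. \<psi> (\<phi> u)) f"
proof -
  have "lin A (push \<phi> f) = push \<psi> (push \<phi> f)"
  proof (rule lin_push_bt[OF push_fin[OF fin]], intro allI impI)
    fix w assume "push \<phi> f w \<noteq> 0"
    then obtain u where "f u \<noteq> 0" "w = \<phi> u" using push_supp[of \<phi> f] by blast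
    then show "A w = bt (\<psi> w)" using A by auto
  qed
  also have "\<dots> = push (\<lambda>u. \<psi> (\<phi> u)) f" by (rule push_push[OF fin])
  finally show ?thesis .
qed

lemma push_cong: "(\<forall>u. f u \<noteq> 0 \<longrightarrow> \<phi> u = \<phi>' u) \<Longrightarrow> push \<phi> f = push \<phi>' f"
  unfolding push_def by (intro ext sum.cong) auto

lemma push_id: "push (\<lambda>u. u) f = f"
proof (rule ext)
  fix s
  show "push (\<lambda>u. u) f s = f s"
  proof (cases "f s = 0")
    case True
    then have "{u. f u \<noteq> 0 \<and> u = s} = {}" by auto
    then show ?thesis using True by (simp add: push_apply)
  next
    case False
    then have "{u. f u \<noteq> 0 \<and> u = s} = {s}" by auto
    then show ?thesis by (simp add: push_apply)
  qed
qed

lemma word_act_Cons: "word_act n v (g # w) f = lin (gen_act n v g) (word_act n v w f)"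
  by (simp add: word_act_def)

lemma word_act_Nil: "word_act n v [] f = f"
  by (simp add: word_act_def)

lemma prepend_bt: "prepend t (bt w) = bt (t # w)"
  by (rule ext) (auto simp: prepend_def bt_def split: list.split)

lemma prepend_zero: "prepend t (\<lambda>s. 0) = (\<lambda>s. 0)"
  by (rule ext) (auto simp: prepend_def split: list.split)

lemma Fact_zero: "\<forall>t\<in>set u. \<not> icong n i t \<Longrightarrow> Fact n v i u = (\<lambda>s. 0)"
  by (induction u) (auto simp: prepend_zero)

lemma Eact_zero: "\<forall>t\<in>set u. \<not> icong n i (t - 1) \<Longrightarrow> Eact n v i u = (\<lambda>s. 0)"
  by (induction u) (auto simp: prepend_zero)

lemma Fact_one:
  "length (filter (icong n i) u) = 1 \<Longrightarrow> \<forall>t\<in>set u. \<not> icong n (Suc i) t \<Longrightarrow>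
   Fact n v i u = bt (map (\<lambda>t. if icong n i t then t + 1 else t) u)"
proof (induction u)
  case Nil
  then show ?case by simp
next
  case (Cons t ts)
  show ?case
  proof (cases "icong n i t")
    case True
    then have "length (filter (icong n i) ts) = 0" using Cons.prems by simp
    then have z: "\<forall>x\<in>set ts. \<not> icong n i x" by (simp add: filter_empty_conv)
    then have "map (\<lambda>t. if icong n i t then t + 1 else t) ts = ts" by (simp add: map_idI)
    then show ?thesis using True z by (simp add: Fact_zero prepend_zero)
  next
    case False
    then have "Fact n v i ts = bt (map (\<lambda>t. if icong n i t then t + 1 else t) ts)"
      using Cons by simp
    moreover have "kval n v (Suc i) t = 1" "kval n v i t = 1"
      using False Cons.prems by (auto simp: kval_def)
    ultimately show ?thesis using False by (simp add: prepend_bt[symmetric])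
  qed
qed

lemma icong_Suc: "icong n (Suc i) x = icong n i (x - 1)"
  unfolding icong_def by (simp add: mod_eq_dvd_iff algebra_simps)

lemma Eact_one:
  "length (filter (\<lambda>t. icong n i (t - 1)) u) = 1 \<Longrightarrow> \<forall>t\<in>set u. \<not> icong n i t \<Longrightarrow>
   Eact n v i u = bt (map (\<lambda>t. if icong n i (t - 1) then t - 1 else t) u)"
proof (induction u)
  case Nil
  then show ?case by simp
next
  case (Cons t ts)
  show ?case
  proof (cases "icong n i (t - 1)")
    case True
    then have "length (filter (\<lambda>t. icong n i (t - 1)) ts) = 0" using Cons.prems by simp
    then have z: "\<forall>x\<in>set ts. \<not> icong n i (x - 1)" by (simp add: filter_empty_conv)
    then have m: "map (\<lambda>t. if icong n i (t - 1) then t - 1 else t) ts = ts" by (simp add: map_idI)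
    have "(\<Prod>x\<leftarrow>ts. kval n v i x / kval n v (Suc i) x) = (\<Prod>x\<leftarrow>ts. 1)"
      by (rule arg_cong[where f = prod_list], rule map_cong)
        (use z Cons.prems in \<open>auto simp: kval_def icong_Suc\<close>)
    then show ?thesis using True z m by (simp add: Eact_zero prepend_zero map_replicate_const)
  next
    case False
    then have "Eact n v i ts = bt (map (\<lambda>t. if icong n i (t - 1) then t - 1 else t) ts)"
      using Cons by simp
    then show ?thesis using False by (simp add: prepend_bt[symmetric])
  qed
qed


lemma icong_iff:
  assumes "x - t = c" "t mod int n = j" "\<bar>int k - (j + c)\<bar> < int n"
  shows "icong n k x \<longleftrightarrow> int k = j + c"
proof -
  have "x mod int n = (j + c) mod int n"
    by (metis assms(1,2) add.commute diff_add_cancel mod_add_left_eq)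
  then have "icong n k x \<longleftrightarrow> int k mod int n = (j + c) mod int n"
    unfolding icong_def by simp
  also have "\<dots> \<longleftrightarrow> int n dvd (int k - (j + c))"
    by (rule mod_eq_dvd_iff)
  also have "\<dots> \<longleftrightarrow> int k - (j + c) = 0"
  proof
    assume d: "int n dvd (int k - (j + c))"
    show "int k - (j + c) = 0"
    proof (rule ccontr)
      assume "int k - (j + c) \<noteq> 0"
      from dvd_imp_le_int[OF this d] assms(3) show False by simp
    qed
  qed simp
  finally show ?thesis by simp
qed

lemma icong_n: "icong n n x = icong n 0 x"
  unfolding icong_def by simp

definition good :: "nat \<Rightarrow> nat \<Rightarrow> int list \<Rightarrow> bool" where
  "good n r u \<longleftrightarrow> (\<forall>t\<in>set u. 1 \<le> t mod int n \<and> t mod int n \<le> int r) \<and>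
     (\<forall>j. 1 \<le> j \<and> j \<le> int r \<longrightarrow> length (filter (\<lambda>t. t mod int n = j) u) = 1)"

lemma good_of_Vwt:
  assumes "e \<in> Vwt n r (omega r)" "n \<ge> r + 1" "e u \<noteq> 0"
  shows "good n r u"
proof -
  from assms have w: "\<forall>i\<in>{1..n}. weight n u i = omega r i" by (auto simp: Vwt_def)
  have cnt: "length (filter (icong n i) u) = omega r i" if "i \<in> {1..n}" for i
    using w that by (simp add: weight_def length_filter_conv_card)
  have P1: "1 \<le> t mod int n \<and> t mod int n \<le> int r" if "t \<in> set u" for t
  proof (rule ccontr)
    assume nb: "\<not> (1 \<le> t mod int n \<and> t mod int n \<le> int r)"
    define m where "m = t mod int n"
    have m0: "0 \<le> m" "m < int n" using assms(2) by (auto simp: m_def)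
    define i where "i = (if m = 0 then n else nat m)"
    have nb': "\<not> (1 \<le> m \<and> m \<le> int r)" using nb by (simp add: m_def)
    have i: "i \<in> {1..n}" "r < i" using nb' m0 assms(2) unfolding i_def by auto
    have "icong n i t"
    proof (cases "m = 0")
      case True then show ?thesis unfolding icong_def i_def m_def by simp
    next
      case False
      then have "int (nat m) mod int n = m" using m0 by simp
      then show ?thesis unfolding icong_def i_def using False by (simp add: m_def)
    qed
    then have "filter (icong n i) u \<noteq> []" using that by (auto simp: filter_empty_conv)
    then have "length (filter (icong n i) u) \<noteq> 0" by simp
    moreover have "omega r i = 0" using i by (simp add: omega_def)
    ultimately show False using cnt[OF i(1)] by simp
  qed
  have P2: "length (filter (\<lambda>t. t mod int n = j) u) = 1" if "1 \<le> j" "j \<le> int r" for j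
  proof -
    have jj: "int (nat j) mod int n = j" using that assms(2) by simp
    have "filter (\<lambda>t. t mod int n = j) u = filter (icong n (nat j)) u"
      by (rule filter_cong) (simp_all only: icong_def jj, auto)
    moreover have "nat j \<in> {1..n}" "nat j \<le> r" using that assms(2) by auto
    ultimately show ?thesis using cnt[of "nat j"] by (simp add: omega_def)
  qed
  show ?thesis unfolding good_def using P1 P2 by blast
qed

definition Hf :: "nat \<Rightarrow> nat \<Rightarrow> nat \<Rightarrow> int \<Rightarrow> int" where
  "Hf n r k t = (if int r - int k < t mod int n then t + 1 else t)"

definition Ge :: "nat \<Rightarrow> nat \<Rightarrow> int \<Rightarrow> int" where
  "Ge n k t = (if 1 \<le> t mod int n \<and> t mod int n \<le> int k + 1 then t - 1 else t)"

lemma F_point: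
  assumes "1 \<le> j" "j \<le> int r" "n \<ge> r + 1" "t mod int n = j" "k < r"
  shows "icong n (r - k) (Hf n r k t) \<longleftrightarrow> j = int (r - k)"
    and "\<not> icong n (Suc (r - k)) (Hf n r k t)"
    and "(if icong n (r - k) (Hf n r k t) then Hf n r k t + 1 else Hf n r k t) = Hf n r (Suc k) t"
proof -
  have rk: "int (r - k) = int r - int k" using assms(5) by simp
  have "(icong n (r - k) (Hf n r k t) \<longleftrightarrow> j = int (r - k)) \<and> \<not> icong n (Suc (r - k)) (Hf n r k t)
     \<and> (if icong n (r - k) (Hf n r k t) then Hf n r k t + 1 else Hf n r k t) = Hf n r (Suc k) t"
  proof (cases "int r - int k < j")
    case True
    have h: "Hf n r k t = t + 1" "Hf n r (Suc k) t = t + 1" using True assms(4) by (auto simp: Hf_def)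
    have a: "icong n (r - k) (t + 1) \<longleftrightarrow> int (r - k) = j + 1"
      by (rule icong_iff[OF _ assms(4)]) (use assms rk in auto)
    have b: "icong n (Suc (r - k)) (t + 1) \<longleftrightarrow> int (Suc (r - k)) = j + 1"
      by (rule icong_iff[OF _ assms(4)]) (use assms rk in auto)
    show ?thesis using h a b True rk by auto
  next
    case False
    have h: "Hf n r k t = t" using False assms(4) by (auto simp: Hf_def)
    have a: "icong n (r - k) t \<longleftrightarrow> int (r - k) = j + 0"
      by (rule icong_iff[OF _ assms(4)]) (use assms rk in auto)
    have b: "icong n (Suc (r - k)) t \<longleftrightarrow> int (Suc (r - k)) = j + 0"
      by (rule icong_iff[OF _ assms(4)]) (use assms rk in auto)
    show ?thesis using h a b False rk assms(4) by (auto simp: Hf_def)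
  qed
  then show "icong n (r - k) (Hf n r k t) \<longleftrightarrow> j = int (r - k)"
    and "\<not> icong n (Suc (r - k)) (Hf n r k t)"
    and "(if icong n (r - k) (Hf n r k t) then Hf n r k t + 1 else Hf n r k t) = Hf n r (Suc k) t"
    by auto
qed

lemma E_point:
  assumes "1 \<le> j" "j \<le> int r" "n \<ge> r + 1" "t mod int n = j" "Suc k < r"
  shows "icong n (Suc k) (Ge n k t - 1) \<longleftrightarrow> j = int k + 2"
    and "\<not> icong n (Suc k) (Ge n k t)"
    and "(if icong n (Suc k) (Ge n k t - 1) then Ge n k t - 1 else Ge n k t) = Ge n (Suc k) t"
proof -
  have "(icong n (Suc k) (Ge n k t - 1) \<longleftrightarrow> j = int k + 2) \<and> \<not> icong n (Suc k) (Ge n k t)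
     \<and> (if icong n (Suc k) (Ge n k t - 1) then Ge n k t - 1 else Ge n k t) = Ge n (Suc k) t"
  proof (cases "j \<le> int k + 1")
    case True
    have h: "Ge n k t = t - 1" "Ge n (Suc k) t = t - 1" using True assms by (auto simp: Ge_def)
    have a: "icong n (Suc k) (t - 1 - 1) \<longleftrightarrow> int (Suc k) = j + (-2)"
      by (rule icong_iff[OF _ assms(4)]) (use assms in auto)
    have b: "icong n (Suc k) (t - 1) \<longleftrightarrow> int (Suc k) = j + (-1)"
      by (rule icong_iff[OF _ assms(4)]) (use assms in auto)
    show ?thesis using h a b True by auto
  next
    case False
    have h: "Ge n k t = t" using False assms(4) by (auto simp: Ge_def)
    have a: "icong n (Suc k) (t - 1) \<longleftrightarrow> int (Suc k) = j + (-1)"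
      by (rule icong_iff[OF _ assms(4)]) (use assms in auto)
    have b: "icong n (Suc k) t \<longleftrightarrow> int (Suc k) = j + 0"
      by (rule icong_iff[OF _ assms(4)]) (use assms in auto)
    show ?thesis using h a b False assms(4) by (auto simp: Ge_def)
  qed
  then show "icong n (Suc k) (Ge n k t - 1) \<longleftrightarrow> j = int k + 2"
    and "\<not> icong n (Suc k) (Ge n k t)"
    and "(if icong n (Suc k) (Ge n k t - 1) then Ge n k t - 1 else Ge n k t) = Ge n (Suc k) t"
    by auto
qed


lemma F_chain:
  assumes fin: "finite {u. e u \<noteq> 0}" and g: "\<forall>u. e u \<noteq> 0 \<longrightarrow> good n r u"
    and nr: "n \<ge> r + 1"
  shows "k \<le> r \<Longrightarrow> word_act n v (map GF [r - k + 1..<r + 1]) e = push (map (Hf n r k)) e"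
proof (induction k)
  case 0
  have "push (map (Hf n r 0)) e = push (\<lambda>u. u) e"
  proof (rule push_cong, intro allI impI)
    fix u assume "e u \<noteq> 0"
    then have "good n r u" using g by blast
    then show "map (Hf n r 0) u = u" by (auto simp: good_def Hf_def intro!: map_idI)
  qed
  then show ?case by (simp add: word_act_Nil push_id)
next
  case (Suc k)
  then have k: "k < r" by simp
  have upt: "[r - Suc k + 1..<r + 1] = (r - k) # [r - k + 1..<r + 1]"
  proof -
    have e1: "r - Suc k + 1 = r - k" using k by simp
    have "[r - k..<r + 1] = (r - k) # [Suc (r - k)..<r + 1]" by (rule upt_conv_Cons) simp
    then show ?thesis using e1 by simp
  qed
  have "word_act n v (map GF [r - Suc k + 1..<r + 1]) e
      = lin (Fact n v (r - k)) (push (map (Hf n r k)) e)"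
    by (simp only: upt list.map word_act_Cons gen_act.simps Suc.IH[OF less_imp_le[OF k]])
  also have "\<dots> = push (\<lambda>u. map (\<lambda>t. if icong n (r - k) t then t + 1 else t) (map (Hf n r k) u)) e"
  proof (rule lin_push[OF fin], intro allI impI)
    fix u assume "e u \<noteq> 0"
    then have gu: "good n r u" using g by blast
    have pt: "\<And>t. t \<in> set u \<Longrightarrow> 1 \<le> t mod int n \<and> t mod int n \<le> int r"
      using gu by (auto simp: good_def)
    have "filter (icong n (r - k)) (map (Hf n r k) u)
        = map (Hf n r k) (filter (\<lambda>t. t mod int n = int (r - k)) u)"
      unfolding filter_map
      by (rule arg_cong[where f = "map _"], rule filter_cong)
        (use pt F_point(1)[OF _ _ nr _ k] in auto)
    then have c: "length (filter (icong n (r - k)) (map (Hf n r k) u)) = 1"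
      using gu k by (simp add: good_def)
    have d: "\<forall>x\<in>set (map (Hf n r k) u). \<not> icong n (Suc (r - k)) x"
      using pt F_point(2)[OF _ _ nr _ k] by auto
    show "Fact n v (r - k) (map (Hf n r k) u) =
      bt (map (\<lambda>t. if icong n (r - k) t then t + 1 else t) (map (Hf n r k) u))"
      by (rule Fact_one[OF c d])
  qed
  also have "\<dots> = push (map (Hf n r (Suc k))) e"
  proof (rule push_cong, intro allI impI)
    fix u assume "e u \<noteq> 0"
    then have gu: "good n r u" using g by blast
    have pt: "\<And>t. t \<in> set u \<Longrightarrow> 1 \<le> t mod int n \<and> t mod int n \<le> int r"
      using gu by (auto simp: good_def)
    show "map (\<lambda>t. if icong n (r - k) t then t + 1 else t) (map (Hf n r k) u) = map (Hf n r (Suc k)) u"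
      unfolding map_map o_def
    proof (rule map_cong[OF refl])
      fix t assume "t \<in> set u"
      with pt have "1 \<le> t mod int n" "t mod int n \<le> int r" by auto
      from F_point(3)[OF this nr refl k]
      show "(if icong n (r - k) (Hf n r k t) then Hf n r k t + 1 else Hf n r k t) = Hf n r (Suc k) t" .
    qed
  qed
  finally show ?case .
qed

lemma E_chain:
  assumes fin: "finite {u. e u \<noteq> 0}" and g: "\<forall>u. e u \<noteq> 0 \<longrightarrow> good n r u"
    and nr: "n \<ge> r + 1"
  shows "k < r \<Longrightarrow> word_act n v (map GE (rev [1..<k + 1]) @ [GE n]) e = push (map (Ge n k)) e"
proof (induction k)
  case 0
  have "word_act n v (map GE (rev [1..<0 + 1]) @ [GE n]) e = lin (Eact n v n) (push (\<lambda>u. u) e)"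
    by (simp add: word_act_Cons word_act_Nil push_id)
  also have "\<dots> = push (\<lambda>u. map (\<lambda>t. if icong n n (t - 1) then t - 1 else t) u) e"
  proof (rule lin_push[OF fin], intro allI impI)
    fix u assume "e u \<noteq> 0"
    then have gu: "good n r u" using g by blast
    have pt: "\<And>t. t \<in> set u \<Longrightarrow> 1 \<le> t mod int n \<and> t mod int n \<le> int r"
      using gu by (auto simp: good_def)
    have a: "icong n n (t - 1) \<longleftrightarrow> t mod int n = 1" if "t \<in> set u" for t
    proof -
      have "icong n 0 (t - 1) \<longleftrightarrow> int 0 = t mod int n + (-1)"
        by (rule icong_iff) (use pt[OF that] nr in auto)
      then show ?thesis by (auto simp: icong_n)
    qed
    have b: "\<not> icong n n t" if "t \<in> set u" for t
    proof -
      have "icong n 0 t \<longleftrightarrow> int 0 = t mod int n + 0"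
        by (rule icong_iff) (use pt[OF that] nr in auto)
      then show ?thesis using pt[OF that] by (auto simp: icong_n)
    qed
    have "filter (\<lambda>t. icong n n (t - 1)) u = filter (\<lambda>t. t mod int n = 1) u"
      by (rule filter_cong) (use a in auto)
    moreover have "length (filter (\<lambda>t. t mod int n = 1) u) = 1"
      using gu 0 unfolding good_def by auto
    ultimately have c: "length (filter (\<lambda>t. icong n n (t - 1)) u) = 1" by simp
    show "Eact n v n u = bt (map (\<lambda>t. if icong n n (t - 1) then t - 1 else t) u)"
      by (rule Eact_one[OF c]) (use b in auto)
  qed
  also have "\<dots> = push (map (Ge n 0)) e"
  proof (rule push_cong, intro allI impI)
    fix u assume "e u \<noteq> 0"
    then have gu: "good n r u" using g by blast
    have pt: "\<And>t. t \<in> set u \<Longrightarrow> 1 \<le> t mod int n \<and> t mod int n \<le> int r"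
      using gu by (auto simp: good_def)
    have a: "icong n n (t - 1) \<longleftrightarrow> t mod int n = 1" if "t \<in> set u" for t
    proof -
      have "icong n 0 (t - 1) \<longleftrightarrow> int 0 = t mod int n + (-1)"
        by (rule icong_iff) (use pt[OF that] nr in auto)
      then show ?thesis by (auto simp: icong_n)
    qed
    show "map (\<lambda>t. if icong n n (t - 1) then t - 1 else t) u = map (Ge n 0) u"
    proof (rule map_cong[OF refl])
      fix t assume "t \<in> set u"
      from pt[OF this] a[OF this]
      show "(if icong n n (t - 1) then t - 1 else t) = Ge n 0 t" by (auto simp: Ge_def)
    qed
  qed
  finally show ?case .
next
  case (Suc k)
  then have k: "Suc k < r" by simp
  have "word_act n v (map GE (rev [1..<Suc k + 1]) @ [GE n]) e
      = lin (Eact n v (Suc k)) (push (map (Ge n k)) e)"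
    using Suc.IH k by (simp add: word_act_Cons)
  also have "\<dots> = push (\<lambda>u. map (\<lambda>t. if icong n (Suc k) (t - 1) then t - 1 else t) (map (Ge n k) u)) e"
  proof (rule lin_push[OF fin], intro allI impI)
    fix u assume "e u \<noteq> 0"
    then have gu: "good n r u" using g by blast
    have pt: "\<And>t. t \<in> set u \<Longrightarrow> 1 \<le> t mod int n \<and> t mod int n \<le> int r"
      using gu by (auto simp: good_def)
    have "filter (\<lambda>t. icong n (Suc k) (t - 1)) (map (Ge n k) u)
        = map (Ge n k) (filter (\<lambda>t. t mod int n = int k + 2) u)"
      unfolding filter_map
      by (rule arg_cong[where f = "map _"], rule filter_cong)
        (use pt E_point(1)[OF _ _ nr _ k] in auto)
    then have c: "length (filter (\<lambda>t. icong n (Suc k) (t - 1)) (map (Ge n k) u)) = 1"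
      using gu k by (simp add: good_def)
    have d: "\<forall>x\<in>set (map (Ge n k) u). \<not> icong n (Suc k) x"
      using pt E_point(2)[OF _ _ nr _ k] by auto
    show "Eact n v (Suc k) (map (Ge n k) u) =
      bt (map (\<lambda>t. if icong n (Suc k) (t - 1) then t - 1 else t) (map (Ge n k) u))"
      by (rule Eact_one[OF c d])
  qed
  also have "\<dots> = push (map (Ge n (Suc k))) e"
  proof (rule push_cong, intro allI impI)
    fix u assume "e u \<noteq> 0"
    then have gu: "good n r u" using g by blast
    have pt: "\<And>t. t \<in> set u \<Longrightarrow> 1 \<le> t mod int n \<and> t mod int n \<le> int r"
      using gu by (auto simp: good_def)
    show "map (\<lambda>t. if icong n (Suc k) (t - 1) then t - 1 else t) (map (Ge n k) u) = map (Ge n (Suc k)) u"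
      unfolding map_map o_def
    proof (rule map_cong[OF refl])
      fix t assume "t \<in> set u"
      with pt have "1 \<le> t mod int n" "t mod int n \<le> int r" by auto
      from E_point(3)[OF this nr refl k]
      show "(if icong n (Suc k) (Ge n k t - 1) then Ge n k t - 1 else Ge n k t) = Ge n (Suc k) t" .
    qed
  qed
  finally show ?case .
qed

theorem lemma2p1p6:
  fixes r n :: nat and e :: "Qv tvec"
  assumes "r \<ge> 3" and "n \<ge> r + 1"
    and "e \<in> Vwt n r (omega r)"
  shows "word_act n qv [GR] e = word_act n qv (map GF [1..<r+1]) e \<and>
         word_act n qv [GRinv] e = word_act n qv (map GE (rev [1..<r]) @ [GE n]) e"
proof -
  have fin: "finite {u. e u \<noteq> 0}" using assms(3) by (simp add: Vwt_def)
  have g: "\<forall>u. e u \<noteq> 0 \<longrightarrow> good n r u" using good_of_Vwt[OF assms(3,2)] by blast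
  have pt: "\<And>u t. e u \<noteq> 0 \<Longrightarrow> t \<in> set u \<Longrightarrow> 1 \<le> t mod int n \<and> t mod int n \<le> int r"
    using g by (auto simp: good_def)
  have R: "word_act n qv [GR] e = push (map (\<lambda>t. t + 1)) e"
    by (simp add: word_act_Cons word_act_Nil)
      (rule lin_push_bt[OF fin], simp add: Ract_def)
  have F: "word_act n qv (map GF [1..<r+1]) e = push (map (Hf n r r)) e"
    using F_chain[OF fin g assms(2), of r qv] by simp
  have FR: "push (map (Hf n r r)) e = push (map (\<lambda>t. t + 1)) e"
    by (rule push_cong, intro allI impI, rule map_cong[OF refl]) (use pt in \<open>force simp: Hf_def\<close>)
  have Ri: "word_act n qv [GRinv] e = push (map (\<lambda>t. t - 1)) e"
    by (simp add: word_act_Cons word_act_Nil)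
      (rule lin_push_bt[OF fin], simp add: Rinvact_def)
  have E: "word_act n qv (map GE (rev [1..<r]) @ [GE n]) e = push (map (Ge n (r - 1))) e"
    using E_chain[OF fin g assms(2), of "r - 1" qv] assms(1) by simp
  have ER: "push (map (Ge n (r - 1))) e = push (map (\<lambda>t. t - 1)) e"
    by (rule push_cong, intro allI impI, rule map_cong[OF refl]) (use pt assms(1) in \<open>force simp: Ge_def\<close>)
  show ?thesis using R F FR Ri E ER by simp
qed

end
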